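(* Let $S$ and $T$ be bottomed linearly ordered sets and let $\psi\colon S\to T$ satisfy: (1) $\psi$ is isotone; (2) if $\psi(x)=\perp_T$ then $x=\perp_S$; (3) $\psi$ is continuous at $\perp_S$, i.e. for every $\epsilon\in T^*$ there exists $\delta\in S^*$ such that $x<\delta$ implies $\psi(x)<\epsilon$. Let $X$ be a topological space and $d\in\mathrm{Ult}(X;S)$. Then $\psi\circ d\in\mathrm{Ult}(X;T)$, $d$ and $\psi\circ d$ generate the same topology on $X$, and moreover they are uniformly equivalent to each other.
   Context: A bottomed linearly ordered set $S$ has a least element $\perp_S$; $S^*=S\setminus\{\perp_S\}$. A map is isotone if $x\le y$ implies $\psi(x)\le\psi(y)$. An $S$-ultrametric on $X$ is $d\colon X\times X\to S$ with $d(x,y)=\perp_S\iff x=y$, $d(x,y)=d(y,x)$, and $d(x,y)\le\max\{d(x,z),d(z,y)\}$; its topology is generated by the open balls $\{y:d(x,y)<\epsilon\}$, $\epsilon\in S^*$. $\mathrm{Ult}(X;S)$ is the set of $S$-ultrametrics generating the topology of $X$. An $S$-ultrametric $d$ and a $T$-ultrametric $e$ on $X$ are uniformly equivalent if for every $\epsilon\in T^*$ there is $\delta\in S^*$ with $d(x,y)<\delta\Rightarrow e(x,y)<\epsilon$, and for every $\epsilon\in S^*$ there is $\delta\in T^*$ with $e(x,y)<\delta\Rightarrow d(x,y)<\epsilon$. *)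

theory Defs
  imports "HOL-Analysis.Analysis"
begin

text \<open>A bottomed linearly ordered set is modelled as a type of class
  \<open>{linorder, order_bot}\<close>; its least element is \<open>bot\<close>, and
  \<open>S\<^sup>* = UNIV - {bot}\<close>.\<close>

definition is_ultrametric :: "'a set \<Rightarrow> ('a \<Rightarrow> 'a \<Rightarrow> 's::{linorder,order_bot}) \<Rightarrow> bool" where
  "is_ultrametric A d \<longleftrightarrow>
     (\<forall>x\<in>A. \<forall>y\<in>A. d x y = bot \<longleftrightarrow> x = y) \<and>
     (\<forall>x\<in>A. \<forall>y\<in>A. d x y = d y x) \<and>
     (\<forall>x\<in>A. \<forall>y\<in>A. \<forall>z\<in>A. d x y \<le> max (d x z) (d z y))"

definition ult_ball :: "'a set \<Rightarrow> ('a \<Rightarrow> 'a \<Rightarrow> 's::{linorder,order_bot}) \<Rightarrow> 'a \<Rightarrow> 's \<Rightarrow> 'a set" where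
  "ult_ball A d x e = {y \<in> A. d x y < e}"

definition ult_topology :: "'a set \<Rightarrow> ('a \<Rightarrow> 'a \<Rightarrow> 's::{linorder,order_bot}) \<Rightarrow> 'a topology" where
  "ult_topology A d = topology_generated_by
     (insert A {ult_ball A d x e | x e. x \<in> A \<and> e \<noteq> bot})"

definition Ult :: "'a topology \<Rightarrow> ('a \<Rightarrow> 'a \<Rightarrow> 's::{linorder,order_bot}) set" where
  "Ult X = {d. is_ultrametric (topspace X) d \<and> ult_topology (topspace X) d = X}"

definition unif_equiv :: "'a set \<Rightarrow> ('a \<Rightarrow> 'a \<Rightarrow> 's::{linorder,order_bot})
                          \<Rightarrow> ('a \<Rightarrow> 'a \<Rightarrow> 't::{linorder,order_bot}) \<Rightarrow> bool" where
  "unif_equiv A d e \<longleftrightarrow>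
     (\<forall>\<epsilon>::'t. \<epsilon> \<noteq> bot \<longrightarrow> (\<exists>\<delta>::'s. \<delta> \<noteq> bot \<and>
        (\<forall>x\<in>A. \<forall>y\<in>A. d x y < \<delta> \<longrightarrow> e x y < \<epsilon>))) \<and>
     (\<forall>\<epsilon>::'s. \<epsilon> \<noteq> bot \<longrightarrow> (\<exists>\<delta>::'t. \<delta> \<noteq> bot \<and>
        (\<forall>x\<in>A. \<forall>y\<in>A. e x y < \<delta> \<longrightarrow> d x y < \<epsilon>)))"

end

theory Submission
  imports Defs
begin

lemma gen_top_le:
  assumes "\<And>s. s \<in> S1 \<Longrightarrow> openin (topology_generated_by S2) s"
  shows "generate_topology_on S1 s \<Longrightarrow> openin (topology_generated_by S2) s"
proof (induction rule: generate_topology_on.induct)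
  case Empty then show ?case by simp
next
  case (Int a b) then show ?case by auto
next
  case (UN K) then show ?case by auto
next
  case (Basis s) then show ?case using assms by auto
qed

lemma gen_top_eq:
  assumes "\<And>s. s \<in> S1 \<Longrightarrow> openin (topology_generated_by S2) s"
    and "\<And>s. s \<in> S2 \<Longrightarrow> openin (topology_generated_by S1) s"
  shows "topology_generated_by S1 = topology_generated_by S2"
  unfolding topology_eq
  using gen_top_le[of S1 S2] gen_top_le[of S2 S1] assms
  by (metis openin_topology_generated_by_iff)

lemma ball_open:
  fixes d :: "'a \<Rightarrow> 'a \<Rightarrow> 's::{linorder,order_bot}" and e :: "'a \<Rightarrow> 'a \<Rightarrow> 't::{linorder,order_bot}"
  assumes ult: "is_ultrametric A e" and ud: "is_ultrametric A d"
    and x: "x \<in> A" and eps: "\<epsilon> \<noteq> bot"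
    and del: "\<delta> \<noteq> bot" and imp: "\<And>y z. y \<in> A \<Longrightarrow> z \<in> A \<Longrightarrow> d y z < \<delta> \<Longrightarrow> e y z < \<epsilon>"
  shows "openin (ult_topology A d) (ult_ball A e x \<epsilon>)"
proof (subst openin_subopen, intro ballI)
  fix y assume y: "y \<in> ult_ball A e x \<epsilon>"
  then have yA: "y \<in> A" and exy: "e x y < \<epsilon>" by (auto simp: ult_ball_def)
  have o: "openin (ult_topology A d) (ult_ball A d y \<delta>)"
    unfolding ult_topology_def using yA del by (intro topology_generated_by_Basis) blast
  have yin: "y \<in> ult_ball A d y \<delta>"
  proof -
    have "d y y = bot" using yA ud unfolding is_ultrametric_def by blast
    then show ?thesis using yA del unfolding ult_ball_def by (simp add: bot.not_eq_extremum)
  qed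
  have sub: "ult_ball A d y \<delta> \<subseteq> ult_ball A e x \<epsilon>"
  proof
    fix z assume "z \<in> ult_ball A d y \<delta>"
    then have zA: "z \<in> A" and "d y z < \<delta>" by (auto simp: ult_ball_def)
    then have "e y z < \<epsilon>" using imp yA by auto
    moreover have "e x z \<le> max (e x y) (e y z)" using ult x yA zA unfolding is_ultrametric_def by blast
    ultimately have "e x z < \<epsilon>" using exy by (simp add: max_less_iff_conj le_less_trans)
    then show "z \<in> ult_ball A e x \<epsilon>" using zA by (simp add: ult_ball_def)
  qed
  show "\<exists>T. openin (ult_topology A d) T \<and> y \<in> T \<and> T \<subseteq> ult_ball A e x \<epsilon>"
    using o yin sub by blast
qed

lemma ult_top_eq:
  fixes d :: "'a \<Rightarrow> 'a \<Rightarrow> 's::{linorder,order_bot}" and e :: "'a \<Rightarrow> 'a \<Rightarrow> 't::{linorder,order_bot}"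
  assumes ud: "is_ultrametric A d" and ue: "is_ultrametric A e"
    and u: "unif_equiv A d e"
  shows "ult_topology A e = ult_topology A d"
proof -
  have A1: "openin (ult_topology A d) A"
    unfolding ult_topology_def by (intro topology_generated_by_Basis) blast
  have A2: "openin (ult_topology A e) A"
    unfolding ult_topology_def by (intro topology_generated_by_Basis) blast
  show ?thesis
    unfolding ult_topology_def[of A e] ult_topology_def[of A d]
  proof (rule gen_top_eq)
    fix s assume "s \<in> insert A {ult_ball A e x \<epsilon> |x \<epsilon>. x \<in> A \<and> \<epsilon> \<noteq> bot}"
    then consider "s = A" | x \<epsilon> where "s = ult_ball A e x \<epsilon>" "x \<in> A" "\<epsilon> \<noteq> bot" by blast
    then show "openin (topology_generated_by (insert A {ult_ball A d x e |x e. x \<in> A \<and> e \<noteq> bot})) s"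
    proof cases
      case 1 then show ?thesis using A1 unfolding ult_topology_def by simp
    next
      case 2
      then obtain \<delta> where "\<delta> \<noteq> bot" "\<forall>y\<in>A. \<forall>z\<in>A. d y z < \<delta> \<longrightarrow> e y z < \<epsilon>"
        using u unfolding unif_equiv_def by blast
      then show ?thesis using ball_open[OF ue ud 2(2) 2(3), of \<delta>] 2(1) unfolding ult_topology_def by blast
    qed
  next
    fix s assume "s \<in> insert A {ult_ball A d x \<epsilon> |x \<epsilon>. x \<in> A \<and> \<epsilon> \<noteq> bot}"
    then consider "s = A" | x \<epsilon> where "s = ult_ball A d x \<epsilon>" "x \<in> A" "\<epsilon> \<noteq> bot" by blast
    then show "openin (topology_generated_by (insert A {ult_ball A e x \<epsilon> |x \<epsilon>. x \<in> A \<and> \<epsilon> \<noteq> bot})) s"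
    proof cases
      case 1 then show ?thesis using A2 unfolding ult_topology_def by simp
    next
      case 2
      then obtain \<delta> where "\<delta> \<noteq> bot" "\<forall>y\<in>A. \<forall>z\<in>A. e y z < \<delta> \<longrightarrow> d y z < \<epsilon>"
        using u unfolding unif_equiv_def by blast
      then show ?thesis using ball_open[OF ud ue 2(2) 2(3), of \<delta>] 2(1) unfolding ult_topology_def by blast
    qed
  qed
qed

theorem lemma2p36:
  fixes \<psi> :: "'s::{linorder,order_bot} \<Rightarrow> 't::{linorder,order_bot}"
    and X :: "'a topology"
    and d :: "'a \<Rightarrow> 'a \<Rightarrow> 's"
  assumes iso: "mono \<psi>"
    and bot_refl: "\<And>x. \<psi> x = bot \<Longrightarrow> x = bot"
    and cont: "\<And>\<epsilon>. \<epsilon> \<noteq> bot \<Longrightarrow> \<exists>\<delta>. \<delta> \<noteq> bot \<and> (\<forall>x. x < \<delta> \<longrightarrow> \<psi> x < \<epsilon>)"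
    and d: "d \<in> Ult X"
  shows "(\<lambda>x y. \<psi> (d x y)) \<in> Ult X \<and>
         ult_topology (topspace X) (\<lambda>x y. \<psi> (d x y)) = ult_topology (topspace X) d \<and>
         unif_equiv (topspace X) d (\<lambda>x y. \<psi> (d x y))"
proof -
  let ?A = "topspace X"
  let ?e = "\<lambda>x y. \<psi> (d x y)"
  have ud: "is_ultrametric ?A d" and td: "ult_topology ?A d = X" using d by (auto simp: Ult_def)
  have pb: "\<psi> bot = bot"
  proof (rule ccontr)
    assume h: "\<psi> bot \<noteq> bot"
    then obtain \<delta> where "\<delta> \<noteq> bot" "\<forall>x. x < \<delta> \<longrightarrow> \<psi> x < \<psi> bot" using cont by blast
    then show False by (metis bot.not_eq_extremum less_irrefl)
  qed
  have pe: "\<psi> x = bot \<longleftrightarrow> x = bot" for x using pb bot_refl by auto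
  have pmax: "\<psi> (max a b) = max (\<psi> a) (\<psi> b)" for a b
  proof (cases "a \<le> b")
    case True then show ?thesis using monoD[OF iso True] by (simp add: max_def)
  next
    case False then have "b \<le> a" by simp
    then show ?thesis using monoD[OF iso, of b a] False by (auto simp: max_def)
  qed
  have ue: "is_ultrametric ?A ?e"
    using ud unfolding is_ultrametric_def
    by (auto simp: pe simp flip: pmax intro: monoD[OF iso])
  have un: "unif_equiv ?A d ?e"
    unfolding unif_equiv_def
  proof (intro conjI allI impI)
    fix \<epsilon> :: 't assume "\<epsilon> \<noteq> bot"
    then obtain \<delta> where "\<delta> \<noteq> bot" "\<forall>x. x < \<delta> \<longrightarrow> \<psi> x < \<epsilon>" using cont by blast
    then show "\<exists>\<delta>. \<delta> \<noteq> bot \<and> (\<forall>x\<in>?A. \<forall>y\<in>?A. d x y < \<delta> \<longrightarrow> ?e x y < \<epsilon>)" by blast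
  next
    fix \<epsilon> :: 's assume h: "\<epsilon> \<noteq> bot"
    have "\<psi> \<epsilon> \<noteq> bot" using h pe by simp
    moreover have "\<forall>x\<in>?A. \<forall>y\<in>?A. ?e x y < \<psi> \<epsilon> \<longrightarrow> d x y < \<epsilon>"
      using iso by (metis monoD not_le leD)
    ultimately show "\<exists>\<delta>. \<delta> \<noteq> bot \<and> (\<forall>x\<in>?A. \<forall>y\<in>?A. ?e x y < \<delta> \<longrightarrow> d x y < \<epsilon>)" by blast
  qed
  have teq: "ult_topology ?A ?e = ult_topology ?A d" by (rule ult_top_eq[OF ud ue un])
  show ?thesis using ue teq td un by (simp add: Ult_def)
qed

end
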